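(* The scheme $X_h\subset U_h^{2,q}$ is defined by the vanishing of the polynomials $$f_{2k}=(a_{2k}^{q^2}-a_{2k})+\sum_{i=1}^{2k-1}(-1)^i a_i^q\,(a_{2k-i}^{q^2}-a_{2k-i}),\qquad 1\le k\le h-1,$$ in the coordinates $a_1,\dots,a_{2(h-1)}$ of $1+\sum a_i\tau^i$ (as usual $a_0=1$ is not a coordinate and does not occur).
   Context: Let $p$ be a prime, $q$ a power of $p$, and $h\ge2$ an integer. For a commutative $\mathbb{F}_q$-algebra $A$, $U_h^{2,q}(A)$ is the set of formal expressions $1+\sum_{i=1}^{2(h-1)}a_i\tau^i$ ($a_i\in A$) with multiplication obtained by extending $(a\tau^i)(b\tau^j)=ab^{q^i}\tau^{i+j}$ bi-additively, where $\tau^0=1$ and $\tau^k=0$ for $k>2(h-1)$; as a scheme $U_h^{2,q}$ is affine space with coordinates $a_1,\dots,a_{2(h-1)}$. For $x=1+\sum a_i\tau^i\in U_h^{2,q}(A)$ let $\iota_h(x)=\begin{pmatrix}1+a_2\pi+a_4\pi^2+\cdots & a_1+a_3\pi+a_5\pi^2+\cdots\\ a_1^q\pi+a_3^q\pi^2+\cdots & 1+a_2^q\pi+a_4^q\pi^2+\cdots\end{pmatrix}$, a matrix over $A[\pi]/(\pi^h)$, and write $\det\iota_h(x)=1+\sum_{k=1}^{h-1}c_k(x)\pi^k$. The subscheme $X_h\subset U_h^{2,q}$ is defined by the condition that $\det\iota_h(x)$ is fixed by the $q$-power Frobenius on coefficients, i.e. $c_k^q=c_k$ for $1\le k\le h-1$.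 *)

theory Defs
  imports "HOL-Computational_Algebra.Polynomial"
begin

text \<open>A point of U_h^{2,q}(A) is given by its coordinates a_1,...,a_{2(h-1)};
  we model it by a function a :: nat => 'a of which only the values at
  1..2(h-1) matter. ucoord adds the conventions a_0 = 1 and a_i = 0 for i > 2(h-1).\<close>
definition ucoord :: "nat \<Rightarrow> (nat \<Rightarrow> 'a::comm_ring_1) \<Rightarrow> nat \<Rightarrow> 'a" where
  "ucoord h a i = (if i = 0 then 1 else if i \<le> 2 * (h - 1) then a i else 0)"

text \<open>Entries of iota_h(x), as polynomials in pi of degree < h
  (representatives of elements of A[pi]/(pi^h)).\<close>
definition iota11 :: "nat \<Rightarrow> nat \<Rightarrow> (nat \<Rightarrow> 'a::comm_ring_1) \<Rightarrow> 'a poly" where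
  "iota11 q h a = (\<Sum>j<h. monom (ucoord h a (2 * j)) j)"
definition iota12 :: "nat \<Rightarrow> nat \<Rightarrow> (nat \<Rightarrow> 'a::comm_ring_1) \<Rightarrow> 'a poly" where
  "iota12 q h a = (\<Sum>j<h. monom (ucoord h a (2 * j + 1)) j)"
definition iota21 :: "nat \<Rightarrow> nat \<Rightarrow> (nat \<Rightarrow> 'a::comm_ring_1) \<Rightarrow> 'a poly" where
  "iota21 q h a = (\<Sum>j\<in>{1..<h}. monom ((ucoord h a (2 * j - 1)) ^ q) j)"
definition iota22 :: "nat \<Rightarrow> nat \<Rightarrow> (nat \<Rightarrow> 'a::comm_ring_1) \<Rightarrow> 'a poly" where
  "iota22 q h a = (\<Sum>j<h. monom ((ucoord h a (2 * j)) ^ q) j)"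

text \<open>det iota_h(x), computed in A[pi]; its coefficients of pi^k for k < h agree
  with those of the determinant in A[pi]/(pi^h).\<close>
definition det_iota :: "nat \<Rightarrow> nat \<Rightarrow> (nat \<Rightarrow> 'a::comm_ring_1) \<Rightarrow> 'a poly" where
  "det_iota q h a = iota11 q h a * iota22 q h a - iota12 q h a * iota21 q h a"

definition c_coef :: "nat \<Rightarrow> nat \<Rightarrow> (nat \<Rightarrow> 'a::comm_ring_1) \<Rightarrow> nat \<Rightarrow> 'a" where
  "c_coef q h a k = coeff (det_iota q h a) k"

definition in_X :: "nat \<Rightarrow> nat \<Rightarrow> (nat \<Rightarrow> 'a::comm_ring_1) \<Rightarrow> bool" where
  "in_X q h a \<longleftrightarrow> (\<forall>k\<in>{1..h-1}. (c_coef q h a k) ^ q = c_coef q h a k)"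

definition f_poly :: "nat \<Rightarrow> nat \<Rightarrow> (nat \<Rightarrow> 'a::comm_ring_1) \<Rightarrow> nat \<Rightarrow> 'a" where
  "f_poly q h a k =
     ((ucoord h a (2*k)) ^ (q^2) - ucoord h a (2*k))
     + (\<Sum>i\<in>{1..2*k-1}. (-1) ^ i * (ucoord h a i) ^ q *
          ((ucoord h a (2*k-i)) ^ (q^2) - ucoord h a (2*k-i)))"

end

theory Submission
  imports Defs
begin

lemma fin_field_pow:
  fixes t :: "'k::{field,finite}"
  shows "t ^ card (UNIV :: 'k set) = t"
proof (cases "t = 0")
  case True thus ?thesis by (simp add: finite_UNIV_card_ge_0)
next
  case False
  let ?S = "UNIV - {0::'k}"
  have bij: "bij_betw ((*) t) ?S ?S"
    unfolding bij_betw_def inj_on_def using False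
    apply (auto simp: image_def)
    by (metis DiffI UNIV_I divide_eq_0_iff mult.commute nonzero_eq_divide_eq singletonD)
  have "(\<Prod>x\<in>?S. t * x) = (\<Prod>x\<in>?S. x)"
    using prod.reindex_bij_betw[OF bij, of "\<lambda>x. x"] by simp
  moreover have "(\<Prod>x\<in>?S. t * x) = t ^ card ?S * (\<Prod>x\<in>?S. x)"
    by (simp add: prod.distrib)
  moreover have "(\<Prod>x\<in>?S. x) \<noteq> 0" by simp
  ultimately have "t ^ card ?S = 1" by simp
  moreover have "card ?S = card (UNIV :: 'k set) - 1" by (simp add: card_Diff_singleton)
  moreover have "card (UNIV :: 'k set) = Suc (card (UNIV :: 'k set) - 1)" using finite_UNIV_card_ge_0[where 'a='k] by simp
  ultimately show ?thesis by (metis power_Suc mult_1_right)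
qed

lemma card_field_ge2: "card (UNIV :: 'k::{field,finite} set) \<ge> 2"
proof -
  have "card {0::'k, 1} \<le> card (UNIV :: 'k set)" by (rule card_mono) auto
  thus ?thesis by simp
qed

lemma choose_zero_field:
  fixes dummy :: "'k::{field,finite}"
  assumes "0 < i" "i < card (UNIV :: 'k set)"
  shows "(of_nat (card (UNIV :: 'k set) choose i) :: 'k) = 0"
proof -
  define q where "q = card (UNIV :: 'k set)"
  define P :: "'k poly" where "P = (\<Sum>i\<in>{1..<q}. monom (of_nat (q choose i)) i)"
  have q2: "q \<ge> 2" unfolding q_def by (rule card_field_ge2)
  have cP: "coeff P j = (if j \<in> {1..<q} then of_nat (q choose j) else 0)" for j
    unfolding P_def by (simp add: coeff_sum coeff_monom)
  have roots: "poly P t = 0" for t :: 'k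
  proof -
    have "poly P t = (\<Sum>i\<in>{1..<q}. of_nat (q choose i) * t ^ i)"
      unfolding P_def by (simp add: poly_sum poly_monom)
    moreover have "(t + 1) ^ q = (\<Sum>i\<le>q. of_nat (q choose i) * t ^ i)"
      by (simp add: binomial_ring)
    moreover have "{..q} = insert 0 (insert q {1..<q})" using q2 by auto
    ultimately have "(t + 1) ^ q = 1 + t ^ q + poly P t" using q2 by simp
    moreover have "(t+1)^q = t + 1" "t ^ q = t" unfolding q_def by (rule fin_field_pow)+
    ultimately show ?thesis by simp
  qed
  have "P = 0"
  proof (rule ccontr)
    assume "P \<noteq> 0"
    hence "card {x. poly P x = 0} \<le> degree P" by (rule card_poly_roots_bound)
    moreover have "degree P \<le> q - 1" by (rule degree_le) (auto simp: cP)
    moreover have "{x. poly P x = 0} = UNIV" using roots by auto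
    ultimately show False using q2 unfolding q_def by simp
  qed
  hence "coeff P i = 0" by simp
  thus ?thesis using assms unfolding cP q_def by simp
qed

lemma frob_add:
  fixes \<phi> :: "'k::{field,finite} \<Rightarrow> 'a::comm_ring_1"
  assumes "card (UNIV :: 'k set) = q"
    and "\<phi> 1 = 1"
    and add: "\<And>x y. \<phi> (x + y) = \<phi> x + \<phi> y"
  shows "(x + y :: 'a) ^ q = x ^ q + y ^ q"
proof -
  have q2: "q \<ge> 2" using card_field_ge2[where 'k='k] assms(1) by simp
  have phi0: "\<phi> 0 = 0" using add[of 0 0] by simp
  have phin: "\<phi> (of_nat n) = of_nat n" for n
    by (induction n) (simp_all add: phi0 add assms(2))
  have z: "(of_nat (q choose i) :: 'a) = 0" if "0 < i" "i < q" for i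
    using phin[of "q choose i"] choose_zero_field[where 'k='k, of i] that assms(1) phi0 by simp
  have "(x + y) ^ q = (\<Sum>i\<le>q. of_nat (q choose i) * x ^ i * y ^ (q - i))"
    by (rule binomial_ring)
  also have "{..q} = insert 0 (insert q {1..<q})" using q2 by auto
  also have "(\<Sum>i\<in>insert 0 (insert q {1..<q}). of_nat (q choose i) * x ^ i * y ^ (q - i))
      = y ^ q + x ^ q" using q2 z by simp
  finally show ?thesis by simp
qed

lemma frob_neg1:
  fixes q :: nat
  assumes "\<And>x y :: 'a::comm_ring_1. (x + y) ^ q = x ^ q + y ^ q" "q > 0"
  shows "(-1 :: 'a) ^ q = -1"
proof -
  have "(1 + (-1::'a)) ^ q = 1 + (-1)^q" using assms(1)[of 1 "-1"] by simp
  hence "1 + (-1::'a)^q = 0" using assms(2) by (simp add: power_0_left)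
  thus ?thesis by (metis add.commute add_eq_0_iff)
qed


lemma alt_split:
  fixes g :: "nat \<Rightarrow> 'a::comm_ring_1"
  shows "(\<Sum>i\<le>2*k. (-1)^i * g i) = (\<Sum>j\<le>k. g (2*j)) - (\<Sum>j<k. g (2*j+1))"
proof (induction k)
  case 0 thus ?case by simp
next
  case (Suc k)
  have "{..2 * Suc k} = insert (2*k+2) (insert (2*k+1) {..2*k})" by auto
  hence "(\<Sum>i\<le>2*Suc k. (-1)^i * g i) = g (2*k+2) - g (2*k+1) + (\<Sum>i\<le>2*k. (-1)^i * g i)"
    by simp
  thus ?case using Suc by (simp add: algebra_simps)
qed

lemma coeff_iota11: "coeff (iota11 q h a) j = (if j < h then ucoord h a (2*j) else 0)"
  unfolding iota11_def by (simp add: coeff_sum coeff_monom)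
lemma coeff_iota12: "coeff (iota12 q h a) j = (if j < h then ucoord h a (2*j+1) else 0)"
  unfolding iota12_def by (simp add: coeff_sum coeff_monom)
lemma coeff_iota21: "coeff (iota21 q h a) j = (if 1 \<le> j \<and> j < h then ucoord h a (2*j-1) ^ q else 0)"
  unfolding iota21_def by (simp add: coeff_sum coeff_monom)
lemma coeff_iota22: "coeff (iota22 q h a) j = (if j < h then ucoord h a (2*j) ^ q else 0)"
  unfolding iota22_def by (simp add: coeff_sum coeff_monom)

lemma c_formula:
  assumes "1 \<le> k" "k < h"
  shows "c_coef q h a k = (\<Sum>i\<le>2*k. (-1)^i * (ucoord h a i * ucoord h a (2*k-i) ^ q))"
proof -
  let ?u = "ucoord h a"
  have E: "coeff (iota11 q h a * iota22 q h a) k = (\<Sum>j\<le>k. ?u (2*j) * ?u (2*k - 2*j) ^ q)"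
    unfolding coeff_mult using assms
    by (intro sum.cong) (auto simp: coeff_iota11 coeff_iota22 right_diff_distrib')
  obtain k' where k': "k = Suc k'" using assms by (cases k) auto
  have O: "coeff (iota12 q h a * iota21 q h a) k = (\<Sum>j<k. ?u (2*j+1) * ?u (2*k - (2*j+1)) ^ q)"
  proof -
    have "coeff (iota12 q h a * iota21 q h a) k = (\<Sum>j<Suc k. coeff (iota12 q h a) j * coeff (iota21 q h a) (k - j))"
      unfolding coeff_mult by (simp add: lessThan_Suc_atMost)
    also have "\<dots> = (\<Sum>j<k. coeff (iota12 q h a) j * coeff (iota21 q h a) (k - j))"
      by (simp add: coeff_iota21)
    also have "\<dots> = (\<Sum>j<k. ?u (2*j+1) * ?u (2*k - (2*j+1)) ^ q)"
      using assms by (intro sum.cong) (auto simp: coeff_iota12 coeff_iota21 diff_mult_distrib2)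
    finally show ?thesis .
  qed
  show ?thesis
    unfolding c_coef_def det_iota_def coeff_diff E O alt_split
    by simp
qed


lemma frob_sum:
  assumes "\<And>x y :: 'a::comm_ring_1. (x + y) ^ q = x ^ q + y ^ q" "q > 0"
  shows "(sum f S :: 'a) ^ q = (\<Sum>i\<in>S. f i ^ q)"
  using assms by (induction S rule: infinite_finite_induct) (auto simp: power_0_left)

lemma key:
  fixes a :: "nat \<Rightarrow> 'a::comm_ring_1"
  assumes F: "\<And>x y :: 'a. (x + y) ^ q = x ^ q + y ^ q" and q0: "q > 0"
    and N: "(-1 :: 'a) ^ q = -1"
    and k: "1 \<le> k" "k < h"
  shows "(c_coef q h a k) ^ q - c_coef q h a k = f_poly q h a k"
proof -
  let ?u = "ucoord h a"
  have sgn: "((-1::'a) ^ i) ^ q = (-1)^i" for i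
    by (metis N power_mult power_mult_distrib mult.commute)
  have cq: "(c_coef q h a k) ^ q = (\<Sum>i\<le>2*k. (-1)^i * (?u i ^ q * ?u (2*k-i) ^ (q^2)))"
    unfolding c_formula[OF k] frob_sum[OF F q0]
    by (intro sum.cong refl) (simp add: power_mult_distrib sgn power2_eq_square power_mult)
  have bij: "bij_betw (\<lambda>i. 2*k - i) {..2*k} {..2*k}"
    by (rule bij_betw_byWitness[where f'="\<lambda>i. 2*k - i"]) auto
  have c2: "c_coef q h a k = (\<Sum>i\<le>2*k. (-1)^i * (?u i ^ q * ?u (2*k-i)))"
  proof -
    have "c_coef q h a k = (\<Sum>i\<le>2*k. (-1)^(2*k-i) * (?u (2*k-i) * ?u (2*k-(2*k-i)) ^ q))"
      unfolding c_formula[OF k] using sum.reindex_bij_betw[OF bij,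
          of "\<lambda>i. (-1)^i * (?u i * ?u (2*k-i) ^ q)"] by simp
    also have "\<dots> = (\<Sum>i\<le>2*k. (-1)^i * (?u i ^ q * ?u (2*k-i)))"
    proof (intro sum.cong refl)
      fix i assume "i \<in> {..2*k}"
      hence "(-1::'a)^(2*k-i) = (-1)^i" "2*k-(2*k-i) = i"
        by (auto simp: minus_one_power_iff)
      thus "(-1::'a)^(2*k-i) * (?u (2*k-i) * ?u (2*k-(2*k-i)) ^ q) = (-1)^i * (?u i ^ q * ?u (2*k-i))"
        by (simp add: mult.commute)
    qed
    finally show ?thesis .
  qed
  have "(c_coef q h a k) ^ q - c_coef q h a k
      = (\<Sum>i\<le>2*k. (-1)^i * ?u i ^ q * (?u (2*k-i) ^ (q^2) - ?u (2*k-i)))"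
    apply (subst cq, subst c2)
    unfolding sum_subtractf[symmetric] by (intro sum.cong refl) (simp add: algebra_simps)
  also have "{..2*k} = insert 0 (insert (2*k) {1..2*k-1})" using k by auto
  also have "(\<Sum>i\<in>insert 0 (insert (2*k) {1..2*k-1}). (-1)^i * ?u i ^ q * (?u (2*k-i) ^ (q^2) - ?u (2*k-i)))
      = f_poly q h a k"
    using k unfolding f_poly_def by (simp add: ucoord_def)
  finally show ?thesis .
qed

theorem theorem4p1:
  fixes \<phi> :: "'k::{field,finite} \<Rightarrow> 'a::comm_ring_1"
    and q h :: nat and a :: "nat \<Rightarrow> 'a"
  assumes "card (UNIV :: 'k set) = q"
    and "\<phi> 1 = 1"
    and "\<And>x y. \<phi> (x + y) = \<phi> x + \<phi> y"
    and "\<And>x y. \<phi> (x * y) = \<phi> x * \<phi> y"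
    and "h \<ge> 2"
  shows "in_X q h a \<longleftrightarrow> (\<forall>k\<in>{1..h-1}. f_poly q h a k = 0)"
proof -
  have F: "\<And>x y :: 'a. (x + y) ^ q = x ^ q + y ^ q"
    using frob_add[OF assms(1,2,3)] by blast
  have q0: "q > 0" using card_field_ge2[where 'k='k] assms(1) by simp
  have N: "(-1 :: 'a) ^ q = -1" by (rule frob_neg1[OF F q0])
  have "\<forall>k\<in>{1..h-1}. (c_coef q h a k) ^ q - c_coef q h a k = f_poly q h a k"
    using key[OF F q0 N] assms(5) by auto
  thus ?thesis unfolding in_X_def by (metis eq_iff_diff_eq_0)
qed

end
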